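(* Let $W\in\mathbb{S}^n_+$, $K\in\mathbb{R}^{m\times n}$, $R_1\in\mathbb{S}^{n_1}_+,\dots,R_q\in\mathbb{S}^{n_q}_+$, $S\in\mathbb{D}^m_+$, $\sigma_1,\dots,\sigma_q>0$, and $Z,J\in\mathbb{R}^{m\times n}$. Let $R(\tau):=\bigoplus_{j=1}^q e^{\sigma_j\tau_j}R_j$ for $\tau\in\mathbb{R}^q$, $\Sigma:=\bigoplus_{j=1}^q\sigma_j\mathbf{I}_{n_j}$, and $\widehat R:=\bigoplus_{i=1}^q R_i$. Then $$\begin{bmatrix}\operatorname{He}((A+BK)W) & -BK & BS-WK^{\mathsf T}-Z^{\mathsf T}\\ \star & \operatorname{He}(R(\tau)A)-\Sigma R(\tau) & K^{\mathsf T}-J^{\mathsf T}\\ \star&\star&-2S\end{bmatrix}\prec 0\quad\text{for all }\tau\in\mathcal{T}$$ holds if and only if, for all $\Psi\in\mathcal{Z}:=\left\{\bigoplus_{i=1}^q\psi_i\mathbf{I}_{n_i}:\ \psi_i\in\{1,e^{\sigma_iT_2^{(i)}}\}\right\}$, $$\mathfrak{N}(\Psi):=\begin{bmatrix}\operatorname{He}((A+BK)W) & -BK & BS-WK^{\mathsf T}-Z^{\mathsf T}\\ \star & \operatorname{He}(\widehat R\Psi A)-\Sigma\widehat R\Psi & K^{\mathsf T}-J^{\mathsf T}\\ \star&\star&-2S\end{bmatrix}\prec 0.$$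
   Context: Fix integers $n,m\ge1$, $1\le q\le n$, $n_1,\dots,n_q\ge1$ with $n_1+\dots+n_q=n$; $A\in\mathbb{R}^{n\times n}$, $B\in\mathbb{R}^{n\times m}$; positive reals $T_2^{(1)},\dots,T_2^{(q)}$, and $\mathcal{T}=[0,T_2^{(1)}]\times\dots\times[0,T_2^{(q)}]$. Notation: $\mathbb{S}^k_+$ symmetric positive definite $k\times k$ matrices; $\mathbb{D}^m_+$ diagonal positive definite $m\times m$ matrices; $\operatorname{He}(M)=M+M^{\mathsf T}$; $\bigoplus$ block-diagonal direct sum; $\star$ symmetric blocks. *)

theory Defs
  imports "Jordan_Normal_Form.Matrix"
begin

definition blk_off :: "(nat \<Rightarrow> nat) \<Rightarrow> nat \<Rightarrow> nat" where
  "blk_off ns j = (\<Sum>i<j. ns i)"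

definition blockdiag :: "nat \<Rightarrow> (nat \<Rightarrow> nat) \<Rightarrow> (nat \<Rightarrow> real mat) \<Rightarrow> real mat" where
  "blockdiag q ns F = mat (blk_off ns q) (blk_off ns q) (\<lambda>(i,k).
     \<Sum>j<q. if blk_off ns j \<le> i \<and> i < blk_off ns (Suc j) \<and> blk_off ns j \<le> k \<and> k < blk_off ns (Suc j)
            then F j $$ (i - blk_off ns j, k - blk_off ns j) else 0)"

definition He :: "real mat \<Rightarrow> real mat" where
  "He M = M + transpose_mat M"

(* Symmetric 3x3 block matrix [M11 M12 M13; * M22 M23; * * M33], block sizes a, b, c;
   the starred blocks are the transposes of the corresponding upper blocks *)
definition sym_block3 :: "nat \<Rightarrow> nat \<Rightarrow> nat \<Rightarrow> real mat \<Rightarrow> real mat \<Rightarrow> real mat \<Rightarrow> real mat \<Rightarrow> real mat \<Rightarrow> real mat \<Rightarrow> real mat" where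
  "sym_block3 a b c M11 M12 M13 M22 M23 M33 = mat (a+b+c) (a+b+c) (\<lambda>(i,j).
     if i < a then
       (if j < a then M11 $$ (i,j) else if j < a+b then M12 $$ (i, j-a) else M13 $$ (i, j-a-b))
     else if i < a+b then
       (if j < a then M12 $$ (j, i-a) else if j < a+b then M22 $$ (i-a, j-a) else M23 $$ (i-a, j-a-b))
     else
       (if j < a then M13 $$ (j, i-a-b) else if j < a+b then M23 $$ (j-a, i-a-b) else M33 $$ (i-a-b, j-a-b)))"

definition neg_def :: "real mat \<Rightarrow> bool" where
  "neg_def M \<longleftrightarrow> M \<in> carrier_mat (dim_row M) (dim_row M) \<and> transpose_mat M = M \<and>
     (\<forall>x \<in> carrier_vec (dim_row M). x \<noteq> 0\<^sub>v (dim_row M) \<longrightarrow> x \<bullet> (M *\<^sub>v x) < 0)"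

definition pos_def :: "nat \<Rightarrow> real mat \<Rightarrow> bool" where
  "pos_def k M \<longleftrightarrow> M \<in> carrier_mat k k \<and> transpose_mat M = M \<and>
     (\<forall>x \<in> carrier_vec k. x \<noteq> 0\<^sub>v k \<longrightarrow> x \<bullet> (M *\<^sub>v x) > 0)"

definition diag_pos :: "nat \<Rightarrow> real mat \<Rightarrow> bool" where
  "diag_pos k M \<longleftrightarrow> M \<in> carrier_mat k k \<and>
     (\<forall>i<k. \<forall>j<k. i \<noteq> j \<longrightarrow> M $$ (i,j) = 0) \<and> (\<forall>i<k. M $$ (i,i) > 0)"

end

theory Submission
  imports Defs
begin


lemma qf: assumes "M \<in> carrier_mat d d" "x \<in> carrier_vec d"
  shows "x \<bullet> (M *\<^sub>v x) = (\<Sum>i<d. \<Sum>j<d. x$i * M$$(i,j) * x$j)"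
  using assms by (auto simp: scalar_prod_def row_def sum_distrib_left mult.assoc atLeast0LessThan intro!: sum.cong)

lemma neg_def_conv:
  assumes P: "neg_def P" and Q: "neg_def Q" and c: "P \<in> carrier_mat d d" "Q \<in> carrier_mat d d"
    and t: "0 \<le> t" "t \<le> (1::real)"
  shows "neg_def ((1-t) \<cdot>\<^sub>m P + t \<cdot>\<^sub>m Q)"
proof -
  have dr: "dim_row ((1-t) \<cdot>\<^sub>m P + t \<cdot>\<^sub>m Q) = d" using c by simp
  have car: "(1-t) \<cdot>\<^sub>m P + t \<cdot>\<^sub>m Q \<in> carrier_mat d d" using c by simp
  have tr: "transpose_mat ((1-t) \<cdot>\<^sub>m P + t \<cdot>\<^sub>m Q) = (1-t) \<cdot>\<^sub>m P + t \<cdot>\<^sub>m Q"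
  proof (rule eq_matI)
    fix i j assume ij: "i < dim_row ((1-t) \<cdot>\<^sub>m P + t \<cdot>\<^sub>m Q)" "j < dim_col ((1-t) \<cdot>\<^sub>m P + t \<cdot>\<^sub>m Q)"
    have "transpose_mat P $$ (i,j) = P $$ (i,j)" "transpose_mat Q $$ (i,j) = Q $$ (i,j)"
      using P Q unfolding neg_def_def by auto
    thus "transpose_mat ((1-t) \<cdot>\<^sub>m P + t \<cdot>\<^sub>m Q) $$ (i,j) = ((1-t) \<cdot>\<^sub>m P + t \<cdot>\<^sub>m Q) $$ (i,j)"
      using ij c by simp
  qed (use c in auto)
  have "x \<bullet> (((1-t) \<cdot>\<^sub>m P + t \<cdot>\<^sub>m Q) *\<^sub>v x) < 0" if x: "x \<in> carrier_vec d" "x \<noteq> 0\<^sub>v d" for x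
  proof -
    have p: "x \<bullet> (P *\<^sub>v x) < 0" using P x c unfolding neg_def_def by auto
    have q: "x \<bullet> (Q *\<^sub>v x) < 0" using Q x c unfolding neg_def_def by auto
    have "x \<bullet> (((1-t) \<cdot>\<^sub>m P + t \<cdot>\<^sub>m Q) *\<^sub>v x) = (1-t) * (x \<bullet> (P *\<^sub>v x)) + t * (x \<bullet> (Q *\<^sub>v x))"
      unfolding qf[OF car x(1)] qf[OF c(1) x(1)] qf[OF c(2) x(1)]
      using c by (simp add: sum_distrib_left sum.distrib[symmetric] algebra_simps)
    also have "\<dots> < 0"
    proof (cases "t = 0")
      case True thus ?thesis using p by simp
    next
      case False
      hence "t * (x \<bullet> (Q *\<^sub>v x)) < 0" using t q by (simp add: mult_pos_neg)
      moreover have "(1-t) * (x \<bullet> (P *\<^sub>v x)) \<le> 0" using t p by (simp add: mult_nonneg_nonpos)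
      ultimately show ?thesis by linarith
    qed
    finally show ?thesis .
  qed
  thus ?thesis unfolding neg_def_def using dr car tr by simp
qed



abbreviation inblk :: "(nat \<Rightarrow> nat) \<Rightarrow> nat \<Rightarrow> nat \<Rightarrow> bool" where
  "inblk ns j k \<equiv> blk_off ns j \<le> k \<and> k < blk_off ns (Suc j)"

lemma blk_off_Suc: "blk_off ns (Suc j) = blk_off ns j + ns j"
  by (simp add: blk_off_def)

lemma blk_off_mono: "j \<le> j' \<Longrightarrow> blk_off ns j \<le> blk_off ns j'"
  unfolding blk_off_def by (rule sum_mono2) auto

lemma blk_unique: "inblk ns j k \<Longrightarrow> inblk ns j' k \<Longrightarrow> j = j'"
proof (rule ccontr)
  assume a: "inblk ns j k" "inblk ns j' k" "j \<noteq> j'"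
  show False
  proof (cases "j < j'")
    case True
    hence "blk_off ns (Suc j) \<le> blk_off ns j'" by (intro blk_off_mono) simp
    thus False using a by linarith
  next
    case False
    hence "blk_off ns (Suc j') \<le> blk_off ns j" using a by (intro blk_off_mono) simp
    thus False using a by linarith
  qed
qed

lemma blk_exists: "k < blk_off ns q \<Longrightarrow> \<exists>j<q. inblk ns j k"
proof (induction q)
  case 0 thus ?case by (simp add: blk_off_def)
next
  case (Suc q)
  show ?case
  proof (cases "k < blk_off ns q")
    case True thus ?thesis using Suc.IH by (meson less_Suc_eq)
  next
    case False thus ?thesis using Suc.prems by auto
  qed
qed

lemma blockdiag_carrier: "blockdiag q ns F \<in> carrier_mat (blk_off ns q) (blk_off ns q)"
  unfolding blockdiag_def by simp

lemma blockdiag_entry: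
  assumes "j < q" "inblk ns j k" "i < blk_off ns q" "k < blk_off ns q"
  shows "blockdiag q ns F $$ (i,k) = (if inblk ns j i then F j $$ (i - blk_off ns j, k - blk_off ns j) else 0)"
proof -
  let ?f = "\<lambda>j. if blk_off ns j \<le> i \<and> i < blk_off ns (Suc j) \<and> blk_off ns j \<le> k \<and> k < blk_off ns (Suc j)
            then F j $$ (i - blk_off ns j, k - blk_off ns j) else 0"
  have "blockdiag q ns F $$ (i,k) = (\<Sum>j<q. ?f j)"
    unfolding blockdiag_def using assms by simp
  also have "\<dots> = ?f j + (\<Sum>j'\<in>{..<q}-{j}. ?f j')"
    using assms by (simp add: sum.remove)
  also have "(\<Sum>j'\<in>{..<q}-{j}. ?f j') = 0"
  proof (rule sum.neutral, rule ballI)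
    fix j' assume j': "j' \<in> {..<q}-{j}"
    have "\<not> (blk_off ns j' \<le> k \<and> k < blk_off ns (Suc j'))"
    proof
      assume "blk_off ns j' \<le> k \<and> k < blk_off ns (Suc j')"
      hence "j = j'" using blk_unique[of ns j k j'] assms(2) by blast
      thus False using j' by simp
    qed
    thus "?f j' = 0" by (simp only: de_Morgan_conj not_le not_less if_False conj_assoc) auto
  qed
  finally show ?thesis using assms by simp
qed

lemma blockdiag_cong: "(\<And>j. j < q \<Longrightarrow> F j = G j) \<Longrightarrow> blockdiag q ns F = blockdiag q ns G"
  unfolding blockdiag_def by (intro arg_cong[where f="mat _ _"] ext) (auto intro!: sum.cong)

lemma blockdiag_lin:
  assumes "\<And>j. j < q \<Longrightarrow> F j \<in> carrier_mat (ns j) (ns j)" "\<And>j. j < q \<Longrightarrow> G j \<in> carrier_mat (ns j) (ns j)"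
  shows "blockdiag q ns (\<lambda>j. a \<cdot>\<^sub>m F j + b \<cdot>\<^sub>m G j) = a \<cdot>\<^sub>m blockdiag q ns F + b \<cdot>\<^sub>m blockdiag q ns G"
proof (rule eq_matI)
  fix i k assume ik: "i < dim_row (a \<cdot>\<^sub>m blockdiag q ns F + b \<cdot>\<^sub>m blockdiag q ns G)"
     "k < dim_col (a \<cdot>\<^sub>m blockdiag q ns F + b \<cdot>\<^sub>m blockdiag q ns G)"
  hence ik': "i < blk_off ns q" "k < blk_off ns q" using blockdiag_carrier[of q ns G] by auto
  obtain j where j: "j < q" "inblk ns j k" using blk_exists[OF ik'(2)] by auto
  have lt: "k - blk_off ns j < ns j" using j blk_off_Suc[of ns j] by linarith
  have lt2: "inblk ns j i \<Longrightarrow> i - blk_off ns j < ns j" using blk_off_Suc[of ns j] by linarith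
  show "blockdiag q ns (\<lambda>j. a \<cdot>\<^sub>m F j + b \<cdot>\<^sub>m G j) $$ (i, k) =
        (a \<cdot>\<^sub>m blockdiag q ns F + b \<cdot>\<^sub>m blockdiag q ns G) $$ (i, k)"
    using ik' blockdiag_carrier[of q ns F] blockdiag_carrier[of q ns G] assms[OF j(1)] lt lt2
    by (simp add: blockdiag_entry[OF j] )
qed (auto simp: blockdiag_def)

lemma blockdiag_scale:
  assumes "\<And>j. j < q \<Longrightarrow> R j \<in> carrier_mat (ns j) (ns j)"
  shows "blockdiag q ns (\<lambda>j. c j \<cdot>\<^sub>m R j) = blockdiag q ns R * blockdiag q ns (\<lambda>j. c j \<cdot>\<^sub>m 1\<^sub>m (ns j))"
proof (rule eq_matI)
  fix i k assume ik: "i < dim_row (blockdiag q ns R * blockdiag q ns (\<lambda>j. c j \<cdot>\<^sub>m 1\<^sub>m (ns j)))"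
     "k < dim_col (blockdiag q ns R * blockdiag q ns (\<lambda>j. c j \<cdot>\<^sub>m 1\<^sub>m (ns j)))"
  hence ik': "i < blk_off ns q" "k < blk_off ns q" by (auto simp: blockdiag_def)
  obtain j where j: "j < q" "inblk ns j k" using blk_exists[OF ik'(2)] by auto
  have lt: "k - blk_off ns j < ns j" using j blk_off_Suc[of ns j] by linarith
  have lt2: "\<And>i. inblk ns j i \<Longrightarrow> i - blk_off ns j < ns j" using blk_off_Suc[of ns j] by linarith
  have D: "blockdiag q ns (\<lambda>j. c j \<cdot>\<^sub>m 1\<^sub>m (ns j)) $$ (l,k) = (if l = k then c j else 0)"
    if "l < blk_off ns q" for l
    using that j lt lt2[of l] ik'(2) by (auto simp: blockdiag_entry[OF j that ik'(2)])
  have "(blockdiag q ns R * blockdiag q ns (\<lambda>j. c j \<cdot>\<^sub>m 1\<^sub>m (ns j))) $$ (i,k)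
     = (\<Sum>l\<in>{0..<blk_off ns q}. blockdiag q ns R $$ (i,l) * (if l = k then c j else 0))"
  proof -
    have c1: "blockdiag q ns R \<in> carrier_mat (blk_off ns q) (blk_off ns q)" by (rule blockdiag_carrier)
    have c2: "blockdiag q ns (\<lambda>j. c j \<cdot>\<^sub>m 1\<^sub>m (ns j)) \<in> carrier_mat (blk_off ns q) (blk_off ns q)" by (rule blockdiag_carrier)
    show ?thesis using ik' c1 c2 unfolding index_mult_mat(1)[OF ik'(1)[folded carrier_matD(1)[OF c1]] ik'(2)[folded carrier_matD(2)[OF c2]]]
      unfolding scalar_prod_def by (auto simp: D intro!: sum.cong)
  qed
  also have "\<dots> = blockdiag q ns R $$ (i,k) * c j"
    using ik' by (simp add: if_distrib cong: if_cong)
  also have "\<dots> = blockdiag q ns (\<lambda>j. c j \<cdot>\<^sub>m R j) $$ (i, k)"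
    unfolding blockdiag_entry[OF j ik'] using assms[OF j(1)] lt lt2[of i] by auto
  finally show "blockdiag q ns (\<lambda>j. c j \<cdot>\<^sub>m R j) $$ (i, k) =
      (blockdiag q ns R * blockdiag q ns (\<lambda>j. c j \<cdot>\<^sub>m 1\<^sub>m (ns j))) $$ (i, k)" by simp
qed (auto simp: blockdiag_def)


lemma He_lin_aux:
  assumes "U \<in> carrier_mat n n" "V \<in> carrier_mat n n" "P \<in> carrier_mat n n" "Q \<in> carrier_mat n n"
  shows "He (a \<cdot>\<^sub>m U + b \<cdot>\<^sub>m V) - (a \<cdot>\<^sub>m P + b \<cdot>\<^sub>m Q) = a \<cdot>\<^sub>m (He U - P) + b \<cdot>\<^sub>m (He V - Q)"
  unfolding He_def by (rule eq_matI) (use assms in \<open>auto simp: algebra_simps\<close>)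

lemma N22_lin:
  assumes c: "Rh \<in> carrier_mat n n" "A \<in> carrier_mat n n" "Sg \<in> carrier_mat n n"
    "X \<in> carrier_mat n n" "Y \<in> carrier_mat n n"
  shows "He (Rh * (a \<cdot>\<^sub>m X + b \<cdot>\<^sub>m Y) * A) - Sg * Rh * (a \<cdot>\<^sub>m X + b \<cdot>\<^sub>m Y)
       = a \<cdot>\<^sub>m (He (Rh * X * A) - Sg * Rh * X) + b \<cdot>\<^sub>m (He (Rh * Y * A) - Sg * Rh * Y)"
proof -
  have p1: "Rh * (a \<cdot>\<^sub>m X + b \<cdot>\<^sub>m Y) * A = a \<cdot>\<^sub>m (Rh * X * A) + b \<cdot>\<^sub>m (Rh * Y * A)"
  proof -
    have s1: "Rh * (a \<cdot>\<^sub>m X + b \<cdot>\<^sub>m Y) = a \<cdot>\<^sub>m (Rh * X) + b \<cdot>\<^sub>m (Rh * Y)"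
      unfolding mult_add_distrib_mat[OF c(1) smult_carrier_mat[OF c(4)] smult_carrier_mat[OF c(5)]]
        mult_smult_distrib[OF c(1) c(4)] mult_smult_distrib[OF c(1) c(5)] ..
    have c6: "Rh * X \<in> carrier_mat n n" "Rh * Y \<in> carrier_mat n n" using c by auto
    show ?thesis unfolding s1
      unfolding add_mult_distrib_mat[OF smult_carrier_mat[OF c6(1)] smult_carrier_mat[OF c6(2)] c(2)]
        mult_smult_assoc_mat[OF c6(1) c(2)] mult_smult_assoc_mat[OF c6(2) c(2)] ..
  qed
  have p2: "Sg * Rh * (a \<cdot>\<^sub>m X + b \<cdot>\<^sub>m Y) = a \<cdot>\<^sub>m (Sg * Rh * X) + b \<cdot>\<^sub>m (Sg * Rh * Y)"
  proof -
    have c7: "Sg * Rh \<in> carrier_mat n n" using c by auto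
    show ?thesis
      unfolding mult_add_distrib_mat[OF c7 smult_carrier_mat[OF c(4)] smult_carrier_mat[OF c(5)]]
        mult_smult_distrib[OF c7 c(4)] mult_smult_distrib[OF c7 c(5)] ..
  qed
  show ?thesis unfolding p1 p2 by (rule He_lin_aux) (use c in auto)
qed

lemma sym_lin:
  assumes XY: "X \<in> carrier_mat b b" "Y \<in> carrier_mat b b" and ab: "\<alpha> + \<beta> = (1::real)"
  shows "sym_block3 a b c M11 M12 M13 (\<alpha> \<cdot>\<^sub>m X + \<beta> \<cdot>\<^sub>m Y) M23 M33
       = \<alpha> \<cdot>\<^sub>m sym_block3 a b c M11 M12 M13 X M23 M33 + \<beta> \<cdot>\<^sub>m sym_block3 a b c M11 M12 M13 Y M23 M33"
proof (rule eq_matI)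
  have e: "\<alpha> * v + \<beta> * v = v" for v :: real using ab by (metis distrib_right mult_1)
  fix i j assume "i < dim_row (\<alpha> \<cdot>\<^sub>m sym_block3 a b c M11 M12 M13 X M23 M33 + \<beta> \<cdot>\<^sub>m sym_block3 a b c M11 M12 M13 Y M23 M33)"
    "j < dim_col (\<alpha> \<cdot>\<^sub>m sym_block3 a b c M11 M12 M13 X M23 M33 + \<beta> \<cdot>\<^sub>m sym_block3 a b c M11 M12 M13 Y M23 M33)"
  hence ij: "i < a+b+c" "j < a+b+c" by (auto simp: sym_block3_def)
  show "sym_block3 a b c M11 M12 M13 (\<alpha> \<cdot>\<^sub>m X + \<beta> \<cdot>\<^sub>m Y) M23 M33 $$ (i, j) =
    (\<alpha> \<cdot>\<^sub>m sym_block3 a b c M11 M12 M13 X M23 M33 + \<beta> \<cdot>\<^sub>m sym_block3 a b c M11 M12 M13 Y M23 M33) $$ (i, j)"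
    using ij XY
    by (cases "i<a"; cases "i<a+b"; cases "j<a"; cases "j<a+b"; simp add: sym_block3_def e)
qed (auto simp: sym_block3_def)

theorem proposition1:
  fixes n m q :: nat and ns :: "nat \<Rightarrow> nat"
    and A B W K Z J S :: "real mat" and R :: "nat \<Rightarrow> real mat"
    and \<sigma> T2 :: "nat \<Rightarrow> real"
  assumes "n \<ge> 1" "m \<ge> 1" "1 \<le> q" "q \<le> n"
    and "\<forall>j<q. ns j \<ge> 1" "(\<Sum>j<q. ns j) = n"
    and "A \<in> carrier_mat n n" "B \<in> carrier_mat n m"
    and "\<forall>j<q. T2 j > 0"
    and "pos_def n W" "K \<in> carrier_mat m n"
    and "\<forall>j<q. pos_def (ns j) (R j)" "diag_pos m S"
    and "\<forall>j<q. \<sigma> j > 0"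
    and "Z \<in> carrier_mat m n" "J \<in> carrier_mat m n"
  shows "(\<forall>\<tau> :: nat \<Rightarrow> real. (\<forall>j<q. 0 \<le> \<tau> j \<and> \<tau> j \<le> T2 j) \<longrightarrow>
           (let R\<tau> = blockdiag q ns (\<lambda>j. exp (\<sigma> j * \<tau> j) \<cdot>\<^sub>m R j);
                \<Sigma> = blockdiag q ns (\<lambda>j. \<sigma> j \<cdot>\<^sub>m 1\<^sub>m (ns j))
            in neg_def (sym_block3 n n m
                 (He ((A + B * K) * W)) (- (B * K)) (B * S - W * transpose_mat K - transpose_mat Z)
                 (He (R\<tau> * A) - \<Sigma> * R\<tau>) (transpose_mat K - transpose_mat J)
                 (- (2 \<cdot>\<^sub>m S)))))
         \<longleftrightarrow>
         (\<forall>\<psi> :: nat \<Rightarrow> real. (\<forall>j<q. \<psi> j \<in> {1, exp (\<sigma> j * T2 j)}) \<longrightarrow>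
           (let \<Psi> = blockdiag q ns (\<lambda>j. \<psi> j \<cdot>\<^sub>m 1\<^sub>m (ns j));
                Rhat = blockdiag q ns R;
                \<Sigma> = blockdiag q ns (\<lambda>j. \<sigma> j \<cdot>\<^sub>m 1\<^sub>m (ns j))
            in neg_def (sym_block3 n n m
                 (He ((A + B * K) * W)) (- (B * K)) (B * S - W * transpose_mat K - transpose_mat Z)
                 (He (Rhat * \<Psi> * A) - \<Sigma> * Rhat * \<Psi>) (transpose_mat K - transpose_mat J)
                 (- (2 \<cdot>\<^sub>m S)))))"
proof -
  define Rh where "Rh = blockdiag q ns R"
  define Sg where "Sg = blockdiag q ns (\<lambda>j. \<sigma> j \<cdot>\<^sub>m 1\<^sub>m (ns j))"
  define Ps where "Ps \<psi> = blockdiag q ns (\<lambda>j. \<psi> j \<cdot>\<^sub>m 1\<^sub>m (ns j))" for \<psi>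
  define M11 where "M11 = He ((A + B * K) * W)"
  define M12 where "M12 = - (B * K)"
  define M13 where "M13 = B * S - W * transpose_mat K - transpose_mat Z"
  define M23 where "M23 = transpose_mat K - transpose_mat J"
  define M33 where "M33 = - (2 \<cdot>\<^sub>m S)"
  define \<Phi> where "\<Phi> \<psi> = sym_block3 n n m M11 M12 M13 (He (Rh * Ps \<psi> * A) - Sg * Rh * Ps \<psi>) M23 M33" for \<psi>
  define E where "E j = exp (\<sigma> j * T2 j)" for j
  have bo: "blk_off ns q = n" using assms(6) by (simp add: blk_off_def)
  have cR: "\<And>j. j < q \<Longrightarrow> R j \<in> carrier_mat (ns j) (ns j)" using assms(12) by (simp add: pos_def_def)
  have cRh: "Rh \<in> carrier_mat n n" unfolding Rh_def using blockdiag_carrier[of q ns R] bo by simp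
  have cSg: "Sg \<in> carrier_mat n n" unfolding Sg_def using blockdiag_carrier[of q ns] bo by simp
  have cPs: "Ps \<psi> \<in> carrier_mat n n" for \<psi> unfolding Ps_def using blockdiag_carrier[of q ns] bo by simp
  have cA: "A \<in> carrier_mat n n" using assms(7) .
  have cPhi: "\<Phi> \<psi> \<in> carrier_mat (n+n+m) (n+n+m)" for \<psi> unfolding \<Phi>_def sym_block3_def by simp
  have E1: "E j > 1" if "j < q" for j
    using assms(9,14) that unfolding E_def by simp
  have tau_eq: "sym_block3 n n m M11 M12 M13
        (He (blockdiag q ns (\<lambda>j. exp (\<sigma> j * \<tau> j) \<cdot>\<^sub>m R j) * A) - Sg * blockdiag q ns (\<lambda>j. exp (\<sigma> j * \<tau> j) \<cdot>\<^sub>m R j)) M23 M33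
       = \<Phi> (\<lambda>j. exp (\<sigma> j * \<tau> j))" for \<tau>
  proof -
    have b: "blockdiag q ns (\<lambda>j. exp (\<sigma> j * \<tau> j) \<cdot>\<^sub>m R j) = Rh * Ps (\<lambda>j. exp (\<sigma> j * \<tau> j))"
      unfolding Rh_def Ps_def by (rule blockdiag_scale) (rule cR)
    have "Sg * (Rh * Ps (\<lambda>j. exp (\<sigma> j * \<tau> j))) = Sg * Rh * Ps (\<lambda>j. exp (\<sigma> j * \<tau> j))"
      using cSg cRh cPs by (metis assoc_mult_mat)
    thus ?thesis unfolding b \<Phi>_def by simp
  qed
  have Phi_cong: "\<Phi> \<psi> = \<Phi> \<psi>'" if "\<And>j. j < q \<Longrightarrow> \<psi> j = \<psi>' j" for \<psi> \<psi>'
  proof -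
    have "Ps \<psi> = Ps \<psi>'" unfolding Ps_def by (rule blockdiag_cong) (simp add: that)
    thus ?thesis unfolding \<Phi>_def by simp
  qed
  have Phi_aff: "\<Phi> (\<lambda>j. (1-t) * \<psi> j + t * \<psi>' j) = (1-t) \<cdot>\<^sub>m \<Phi> \<psi> + t \<cdot>\<^sub>m \<Phi> \<psi>'" for t \<psi> \<psi>'
  proof -
    have "Ps (\<lambda>j. (1-t) * \<psi> j + t * \<psi>' j)
        = blockdiag q ns (\<lambda>j. (1-t) \<cdot>\<^sub>m (\<psi> j \<cdot>\<^sub>m 1\<^sub>m (ns j)) + t \<cdot>\<^sub>m (\<psi>' j \<cdot>\<^sub>m 1\<^sub>m (ns j)))"
      unfolding Ps_def by (rule blockdiag_cong) (rule eq_matI, auto simp: algebra_simps)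
    also have "\<dots> = (1-t) \<cdot>\<^sub>m Ps \<psi> + t \<cdot>\<^sub>m Ps \<psi>'"
      unfolding Ps_def by (rule blockdiag_lin) auto
    finally have p: "Ps (\<lambda>j. (1-t) * \<psi> j + t * \<psi>' j) = (1-t) \<cdot>\<^sub>m Ps \<psi> + t \<cdot>\<^sub>m Ps \<psi>'" .
    show ?thesis unfolding \<Phi>_def p N22_lin[OF cRh cA cSg cPs cPs]
      by (rule sym_lin) (use cRh cA cSg cPs[of \<psi>] cPs[of \<psi>'] in \<open>auto simp: He_def intro!: minus_carrier_mat mult_carrier_mat[of _ n n]\<close>)
  qed
  have claim: "\<forall>\<psi>. (\<forall>j<q. (j < k \<longrightarrow> 1 \<le> \<psi> j \<and> \<psi> j \<le> E j) \<and> (k \<le> j \<longrightarrow> \<psi> j \<in> {1, E j})) \<longrightarrow> neg_def (\<Phi> \<psi>)"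
    if V: "\<forall>\<psi>. (\<forall>j<q. \<psi> j \<in> {1, E j}) \<longrightarrow> neg_def (\<Phi> \<psi>)" and kq: "k \<le> q" for k
    using kq
  proof (induction k)
    case 0 thus ?case using V by auto
  next
    case (Suc k)
    hence kq: "k < q" by simp
    show ?case
    proof (intro allI impI)
      fix \<psi> assume h: "\<forall>j<q. (j < Suc k \<longrightarrow> 1 \<le> \<psi> j \<and> \<psi> j \<le> E j) \<and> (Suc k \<le> j \<longrightarrow> \<psi> j \<in> {1, E j})"
      define \<psi>0 where "\<psi>0 = \<psi>(k := 1)"
      define \<psi>1 where "\<psi>1 = \<psi>(k := E k)"
      define t where "t = (\<psi> k - 1) / (E k - 1)"
      have Ek: "E k > 1" using E1 kq .
      have hk: "1 \<le> \<psi> k" "\<psi> k \<le> E k" using h kq by auto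
      have t01: "0 \<le> t" "t \<le> 1" unfolding t_def using Ek hk by (auto simp: divide_simps)
      have IH: "\<forall>\<psi>. (\<forall>j<q. (j < k \<longrightarrow> 1 \<le> \<psi> j \<and> \<psi> j \<le> E j) \<and> (k \<le> j \<longrightarrow> \<psi> j \<in> {1, E j})) \<longrightarrow> neg_def (\<Phi> \<psi>)"
        using Suc.IH kq by simp
      have n0: "neg_def (\<Phi> \<psi>0)"
      proof (rule IH[rule_format], intro allI impI conjI)
        fix j assume j: "j < q"
        show "j < k \<Longrightarrow> 1 \<le> \<psi>0 j" "j < k \<Longrightarrow> \<psi>0 j \<le> E j" using h j unfolding \<psi>0_def by auto
        show "k \<le> j \<Longrightarrow> \<psi>0 j \<in> {1, E j}"
        proof -
          assume kj: "k \<le> j"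
          show ?thesis
          proof (cases "j = k")
            case True thus ?thesis unfolding \<psi>0_def by simp
          next
            case False hence "Suc k \<le> j" using kj by simp
            thus ?thesis using h j False unfolding \<psi>0_def by simp
          qed
        qed
      qed
      have n1: "neg_def (\<Phi> \<psi>1)"
      proof (rule IH[rule_format], intro allI impI conjI)
        fix j assume j: "j < q"
        show "j < k \<Longrightarrow> 1 \<le> \<psi>1 j" "j < k \<Longrightarrow> \<psi>1 j \<le> E j" using h j unfolding \<psi>1_def by auto
        show "k \<le> j \<Longrightarrow> \<psi>1 j \<in> {1, E j}"
        proof -
          assume kj: "k \<le> j"
          show ?thesis
          proof (cases "j = k")
            case True thus ?thesis unfolding \<psi>1_def by simp
          next
            case False hence "Suc k \<le> j" using kj by simp
            thus ?thesis using h j False unfolding \<psi>1_def by simp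
          qed
        qed
      qed
      have "\<psi> = (\<lambda>j. (1-t) * \<psi>0 j + t * \<psi>1 j)"
      proof
        fix j show "\<psi> j = (1-t) * \<psi>0 j + t * \<psi>1 j"
        proof (cases "j = k")
          case True
          have "(1-t) * 1 + t * E k = 1 + t * (E k - 1)" by (simp add: algebra_simps)
          also have "\<dots> = \<psi> k" unfolding t_def using Ek by simp
          finally show ?thesis using True unfolding \<psi>0_def \<psi>1_def by simp
        next
          case False thus ?thesis unfolding \<psi>0_def \<psi>1_def by (simp add: algebra_simps)
        qed
      qed
      hence "\<Phi> \<psi> = (1-t) \<cdot>\<^sub>m \<Phi> \<psi>0 + t \<cdot>\<^sub>m \<Phi> \<psi>1" using Phi_aff by metis
      thus "neg_def (\<Phi> \<psi>)" using neg_def_conv[OF n0 n1 cPhi cPhi t01] by simp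
    qed
  qed
  have main: "(\<forall>\<tau> :: nat \<Rightarrow> real. (\<forall>j<q. 0 \<le> \<tau> j \<and> \<tau> j \<le> T2 j) \<longrightarrow> neg_def (\<Phi> (\<lambda>j. exp (\<sigma> j * \<tau> j))))
      \<longleftrightarrow> (\<forall>\<psi>. (\<forall>j<q. \<psi> j \<in> {1, E j}) \<longrightarrow> neg_def (\<Phi> \<psi>))"
  proof
    assume L: "\<forall>\<tau> :: nat \<Rightarrow> real. (\<forall>j<q. 0 \<le> \<tau> j \<and> \<tau> j \<le> T2 j) \<longrightarrow> neg_def (\<Phi> (\<lambda>j. exp (\<sigma> j * \<tau> j)))"
    show "\<forall>\<psi>. (\<forall>j<q. \<psi> j \<in> {1, E j}) \<longrightarrow> neg_def (\<Phi> \<psi>)"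
    proof (intro allI impI)
      fix \<psi> assume v: "\<forall>j<q. \<psi> j \<in> {1, E j}"
      define \<tau> where "\<tau> j = (if \<psi> j = 1 then 0 else T2 j)" for j
      have "\<forall>j<q. 0 \<le> \<tau> j \<and> \<tau> j \<le> T2 j" unfolding \<tau>_def using assms(9) by auto
      hence "neg_def (\<Phi> (\<lambda>j. exp (\<sigma> j * \<tau> j)))" using L by blast
      moreover have "\<Phi> (\<lambda>j. exp (\<sigma> j * \<tau> j)) = \<Phi> \<psi>"
        by (rule Phi_cong) (use v in \<open>auto simp: \<tau>_def E_def\<close>)
      ultimately show "neg_def (\<Phi> \<psi>)" by simp
    qed
  next
    assume V: "\<forall>\<psi>. (\<forall>j<q. \<psi> j \<in> {1, E j}) \<longrightarrow> neg_def (\<Phi> \<psi>)"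
    show "\<forall>\<tau> :: nat \<Rightarrow> real. (\<forall>j<q. 0 \<le> \<tau> j \<and> \<tau> j \<le> T2 j) \<longrightarrow> neg_def (\<Phi> (\<lambda>j. exp (\<sigma> j * \<tau> j)))"
    proof (intro allI impI)
      fix \<tau> :: "nat \<Rightarrow> real" assume b: "\<forall>j<q. 0 \<le> \<tau> j \<and> \<tau> j \<le> T2 j"
      have "\<forall>j<q. 1 \<le> exp (\<sigma> j * \<tau> j) \<and> exp (\<sigma> j * \<tau> j) \<le> E j"
        unfolding E_def using b assms(14) by (auto intro: mult_left_mono)
      thus "neg_def (\<Phi> (\<lambda>j. exp (\<sigma> j * \<tau> j)))" using claim[OF V order_refl] by auto
    qed
  qed
  show ?thesis
    unfolding Let_def tau_eq[unfolded M11_def M12_def M13_def M23_def M33_def Sg_def]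
    using main unfolding \<Phi>_def Rh_def Sg_def Ps_def M11_def M12_def M13_def M23_def M33_def E_def .
qed

end
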